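(* Let $(\mathcal{X},\kappa)$ be a finite similarity space with Gram matrix $\mathbf{K}$, let $\mathcal{Y}$ be a finite set, and let $(X,Y)$ be a random pair with values in $\mathcal{X}\times\mathcal{Y}$, with marginal law $\mathbb{P}_y$ of $Y$. Then for any such kernel $\kappa$, $$\mathbb{H}^{\mathbf{K},\mathbf{I}}[X\mid Y]=\mathbb{E}_{y\sim\mathbb{P}_y}\big[\mathbb{H}^{\mathbf{K}}[X\mid Y=y]\big].$$
   Context: A finite similarity space $(\mathcal{X},\kappa)$ is a finite set with a symmetric $\kappa:\mathcal{X}\times\mathcal{X}\to[0,1]$ with $\kappa(x,x)=1$; its Gram matrix is $\mathbf{K}_{x,y}=\kappa(x,y)$. For a distribution $\mathbb{P}$ on $\mathcal{X}$, $(\mathbf{K}\mathbb{P})(x)=\sum_y\kappa(x,y)\mathbb{P}(y)$ and the GAIT entropy is $\mathbb{H}^{\mathbf{K}}[\mathbb{P}]=-\sum_x\mathbb{P}(x)\log(\mathbf{K}\mathbb{P})(x)$ (with $0\log0=0$). $\mathbf{I}$ denotes the identity kernel on $\mathcal{Y}$ ($\iota(y,y')=1$ if $y=y'$, else $0$). For kernels $\kappa$ on $\mathcal{X}$ and $\lambda$ on $\mathcal{Y}$ with Gram matrices $\mathbf{K},\mathbf{\Lambda}$, the joint entropy $\mathbb{H}^{\mathbf{K}\otimes\mathbf{\Lambda}}[X,Y]$ is the GAIT entropy of the joint law of $(X,Y)$ with respect to the product kernel $\kappa(x,x')\lambda(y,y')$, and the conditional entropy is $\mathbb{H}^{\mathbf{K},\mathbf{\Lambda}}[X\mid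 Y]=\mathbb{H}^{\mathbf{K}\otimes\mathbf{\Lambda}}[X,Y]-\mathbb{H}^{\mathbf{\Lambda}}[Y]$. $\mathbb{H}^{\mathbf{K}}[X\mid Y=y]$ denotes the GAIT entropy of the conditional law of $X$ given $Y=y$. *)

theory Defs
  imports "HOL-Analysis.Analysis"
begin

definition similarity_kernel :: "('a::finite \<Rightarrow> 'a \<Rightarrow> real) \<Rightarrow> bool" where
  "similarity_kernel k \<longleftrightarrow>
     (\<forall>x y. k x y = k y x) \<and> (\<forall>x y. 0 \<le> k x y \<and> k x y \<le> 1) \<and> (\<forall>x. k x x = 1)"

definition is_distribution :: "('a::finite \<Rightarrow> real) \<Rightarrow> bool" where
  "is_distribution P \<longleftrightarrow> (\<forall>x. 0 \<le> P x) \<and> (\<Sum>x\<in>UNIV. P x) = 1"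

definition kernel_apply :: "('a::finite \<Rightarrow> 'a \<Rightarrow> real) \<Rightarrow> ('a \<Rightarrow> real) \<Rightarrow> 'a \<Rightarrow> real" where
  "kernel_apply k P x = (\<Sum>y\<in>UNIV. k x y * P y)"

text \<open>GAIT entropy; terms with P x = 0 vanish (0 log 0 = 0 convention,
automatic since 0 * t = 0).\<close>
definition gait_entropy :: "('a::finite \<Rightarrow> 'a \<Rightarrow> real) \<Rightarrow> ('a \<Rightarrow> real) \<Rightarrow> real" where
  "gait_entropy k P = - (\<Sum>x\<in>UNIV. P x * ln (kernel_apply k P x))"

definition id_kernel :: "'a \<Rightarrow> 'a \<Rightarrow> real" where
  "id_kernel y y' = (if y = y' then 1 else 0)"

definition prod_kernel :: "('a \<Rightarrow> 'a \<Rightarrow> real) \<Rightarrow> ('b \<Rightarrow> 'b \<Rightarrow> real)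
    \<Rightarrow> ('a \<times> 'b) \<Rightarrow> ('a \<times> 'b) \<Rightarrow> real" where
  "prod_kernel k l p q = k (fst p) (fst q) * l (snd p) (snd q)"

definition marg_snd :: "('a::finite \<times> 'b \<Rightarrow> real) \<Rightarrow> 'b \<Rightarrow> real" where
  "marg_snd P y = (\<Sum>x\<in>UNIV. P (x, y))"

text \<open>Conditional law of X given Y = y (meaningful when the marginal of y is positive).\<close>
definition cond_law :: "('a::finite \<times> 'b \<Rightarrow> real) \<Rightarrow> 'b \<Rightarrow> 'a \<Rightarrow> real" where
  "cond_law P y x = P (x, y) / marg_snd P y"

definition gait_cond_entropy :: "('a::finite \<Rightarrow> 'a \<Rightarrow> real) \<Rightarrow> ('b::finite \<Rightarrow> 'b \<Rightarrow> real)
    \<Rightarrow> ('a \<times> 'b \<Rightarrow> real) \<Rightarrow> real" where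
  "gait_cond_entropy k l P = gait_entropy (prod_kernel k l) P - gait_entropy l (marg_snd P)"

end

theory Submission
  imports Defs
begin

lemma per_y:
  fixes k :: "'x::finite \<Rightarrow> 'x \<Rightarrow> real"
    and P :: "'x \<times> 'y::finite \<Rightarrow> real"
  assumes sk: "similarity_kernel k"
    and d: "is_distribution P"
  shows "- (\<Sum>x\<in>UNIV. P (x,y) * ln (\<Sum>x'\<in>UNIV. k x x' * P (x',y))) + marg_snd P y * ln (marg_snd P y)
     = marg_snd P y * gait_entropy k (cond_law P y)"
proof -
  define m where "m = marg_snd P y"
  have nn: "\<And>p. 0 \<le> P p" using d by (simp add: is_distribution_def split_paired_all)
  have kn: "\<And>a b. 0 \<le> k a b" and kd: "\<And>a. k a a = 1" using sk by (auto simp: similarity_kernel_def)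
  have m0: "m \<ge> 0" unfolding m_def marg_snd_def by (intro sum_nonneg) (simp add: nn)
  show ?thesis
  proof (cases "m = 0")
    case True
    have "\<And>x. P (x,y) = 0"
    proof -
      fix x
      have "(\<Sum>x\<in>UNIV. P (x,y)) = 0" using True by (simp add: m_def marg_snd_def)
      then show "P (x,y) = 0" using sum_nonneg_eq_0_iff[of UNIV "\<lambda>x. P (x,y)"] nn by auto
    qed
    then show ?thesis using True by (simp add: m_def)
  next
    case False
    hence mp: "m > 0" using m0 by simp
    have A: "P (x,y) * ln (\<Sum>x'\<in>UNIV. k x x' * P (x',y)) - P (x,y) * ln m
        = m * (cond_law P y x * ln (kernel_apply k (cond_law P y) x))" for x
    proof (cases "P (x,y) = 0")
      case True then show ?thesis by (simp add: cond_law_def)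
    next
      case False
      hence pp: "P (x,y) > 0" using nn[of "(x,y)"] by simp
      have ge: "(\<Sum>x'\<in>UNIV. k x x' * P (x',y)) \<ge> k x x * P (x,y)"
        by (rule member_le_sum) (auto simp: kn nn)
      hence Apos: "(\<Sum>x'\<in>UNIV. k x x' * P (x',y)) > 0" using pp kd[of x] by simp
      have ka: "kernel_apply k (cond_law P y) x = (\<Sum>x'\<in>UNIV. k x x' * P (x',y)) / m"
        by (simp add: kernel_apply_def cond_law_def m_def sum_divide_distrib)
      show ?thesis using mp Apos
        by (simp add: ka cond_law_def m_def[symmetric] ln_div algebra_simps)
    qed
    have "m * gait_entropy k (cond_law P y)
        = - (\<Sum>x\<in>UNIV. P (x,y) * ln (\<Sum>x'\<in>UNIV. k x x' * P (x',y)) - P (x,y) * ln m)"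
      by (simp add: gait_entropy_def A sum_distrib_left)
    also have "\<dots> = - (\<Sum>x\<in>UNIV. P (x,y) * ln (\<Sum>x'\<in>UNIV. k x x' * P (x',y))) + m * ln m"
      by (simp add: sum_subtractf sum_distrib_right[symmetric] m_def marg_snd_def)
    finally show ?thesis by (simp add: m_def)
  qed
qed

theorem theorem4:
  fixes k :: "'x::finite \<Rightarrow> 'x \<Rightarrow> real"
    and P :: "'x \<times> 'y::finite \<Rightarrow> real"
  assumes "similarity_kernel k"
    and "is_distribution P"
  shows "gait_cond_entropy k id_kernel P =
         (\<Sum>y\<in>UNIV. marg_snd P y * gait_entropy k (cond_law P y))"
proof -
  have ka: "kernel_apply (prod_kernel k id_kernel) P (x,y) = (\<Sum>x'\<in>UNIV. k x x' * P (x',y))" for x y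
  proof -
    have "kernel_apply (prod_kernel k id_kernel) P (x,y)
        = (\<Sum>y'\<in>UNIV. \<Sum>x'\<in>UNIV. k x x' * id_kernel y y' * P (x',y'))"
      unfolding kernel_apply_def prod_kernel_def UNIV_Times_UNIV[symmetric]
      by (subst sum.swap) (simp add: sum.cartesian_product split_def)
    also have "\<dots> = (\<Sum>y'\<in>UNIV. if y' = y then (\<Sum>x'\<in>UNIV. k x x' * P (x',y)) else 0)"
      by (intro sum.cong) (auto simp: id_kernel_def)
    also have "\<dots> = (\<Sum>x'\<in>UNIV. k x x' * P (x',y))"
      by simp
    finally show ?thesis .
  qed
  have ka2: "kernel_apply (prod_kernel k id_kernel) P p = (\<Sum>x'\<in>UNIV. k (fst p) x' * P (x',snd p))" for p
    using ka[of "fst p" "snd p"] by simp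
  have km: "kernel_apply id_kernel (marg_snd P) y = marg_snd P y" for y
  proof -
    have "kernel_apply id_kernel (marg_snd P) y = (\<Sum>y'\<in>UNIV. if y' = y then marg_snd P y else 0)"
      unfolding kernel_apply_def by (intro sum.cong) (auto simp: id_kernel_def)
    then show ?thesis by simp
  qed
  have j: "gait_entropy (prod_kernel k id_kernel) P
      = - (\<Sum>y\<in>UNIV. \<Sum>x\<in>UNIV. P (x,y) * ln (\<Sum>x'\<in>UNIV. k x x' * P (x',y)))"
    unfolding gait_entropy_def UNIV_Times_UNIV[symmetric]
    by (subst sum.swap) (simp add: sum.cartesian_product split_def ka2)
  have mg: "gait_entropy id_kernel (marg_snd P) = - (\<Sum>y\<in>UNIV. marg_snd P y * ln (marg_snd P y))"
    by (simp add: gait_entropy_def km)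
  show ?thesis
    unfolding gait_cond_entropy_def j mg per_y[OF assms, symmetric]
    by (simp add: sum_subtractf)
qed

end
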